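(* Consider, on $\{(\theta_1,\dots,\theta_4,I_1,\dots,I_4)\in\mathbb{T}^4\times(0,\infty)^4\}$, the Hamiltonian \[ \mathcal{G}:=2\sqrt{I_1I_2I_3I_4}\,\cos(\theta_1-\theta_2+\theta_3-\theta_4), \] with $(\theta_i,I_i)$, $i=1,\dots,4$, canonically conjugate pairs. Let $\mathtt{c}>0$. Then for every sufficiently small $\varepsilon>0$ with $\mathtt{c}>\tfrac83\varepsilon$ there exists an orbit $g_{\varepsilon,\mathtt{c}}(t)=(\theta_1(t),\dots,\theta_4(t),I_1(t),\dots,I_4(t))$ of $\mathcal{G}$ and a time $T_0>0$ such that \[ I_1(0)=I_2(0)=I_3(0)=\frac{\mathtt{c}-\varepsilon}{3},\qquad I_4(0)=\varepsilon, \] \[ I_1(T_0)=I_3(T_0)=\frac{\mathtt{c}}{6}+\frac{2\varepsilon}{3},\qquad I_2(T_0)=\frac{\mathtt{c}}{2}-\frac{4\varepsilon}{3},\qquad I_4(T_0)=\frac{\mathtt{c}}{6}, \] and $T_0\le\dfrac{6}{\mathtt{c}}$.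
   Context: The orbit is a solution of Hamilton's equations $\dot\theta_i=\partial_{I_i}\mathcal{G}$, $\dot I_i=-\partial_{\theta_i}\mathcal{G}$, $i=1,\dots,4$. "Sufficiently small $\varepsilon$" means $\varepsilon$ below a threshold that may depend on $\mathtt{c}$. *)

theory Defs
  imports "HOL-Analysis.Analysis"
begin

text \<open>Phase-space point: angles th i and actions I i for i = 1..4 (values at
other indices are irrelevant). The Hamiltonian
  G = 2 sqrt(I1 I2 I3 I4) cos(th1 - th2 + th3 - th4),
considered on T^4 x (0,inf)^4 (angles lifted to R).\<close>

definition G :: "(nat \<Rightarrow> real) \<Rightarrow> (nat \<Rightarrow> real) \<Rightarrow> real" where
  "G th I = 2 * sqrt (I 1 * I 2 * I 3 * I 4) * cos (th 1 - th 2 + th 3 - th 4)"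

definition dG_dth :: "nat \<Rightarrow> (nat \<Rightarrow> real) \<Rightarrow> (nat \<Rightarrow> real) \<Rightarrow> real" where
  "dG_dth i th I = deriv (\<lambda>s. G (th(i := s)) I) (th i)"

definition dG_dI :: "nat \<Rightarrow> (nat \<Rightarrow> real) \<Rightarrow> (nat \<Rightarrow> real) \<Rightarrow> real" where
  "dG_dI i th I = deriv (\<lambda>s. G th (I(i := s))) (I i)"

definition is_orbit_on ::
  "(real \<Rightarrow> nat \<Rightarrow> real) \<Rightarrow> (real \<Rightarrow> nat \<Rightarrow> real) \<Rightarrow> real \<Rightarrow> bool" where
  "is_orbit_on th I T \<longleftrightarrow>
     (\<forall>t\<in>{0..T}. \<forall>i\<in>{1..4::nat}. I t i > 0) \<and>
     (\<forall>t\<in>{0..T}. \<forall>i\<in>{1..4::nat}.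
        ((\<lambda>s. th s i) has_real_derivative dG_dI i (th t) (I t)) (at t within {0..T}) \<and>
        ((\<lambda>s. I s i) has_real_derivative - dG_dth i (th t) (I t)) (at t within {0..T}))"

end

theory Submission
  imports Defs "HOL-Complex_Analysis.Conformal_Mappings"
begin

definition thc :: "nat \<Rightarrow> real" where
  "thc = (\<lambda>i. if i = 1 then - pi/2 else 0)"

lemma G_thc: "G thc J = 0"
  by (simp add: G_def thc_def)

lemma dGdI_thc: "dG_dI i thc J = 0"
  unfolding dG_dI_def by (simp add: G_thc)

lemma dGdth1: "dG_dth 1 thc J = 2 * sqrt (J 1 * J 2 * J 3 * J 4)"
proof -
  have e: "(\<lambda>s. G (thc(1 := s)) J) = (\<lambda>s. 2 * sqrt (J 1 * J 2 * J 3 * J 4) * cos s)"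
    by (auto simp: G_def thc_def)
  have "DERIV (\<lambda>s. 2 * sqrt (J 1 * J 2 * J 3 * J 4) * cos s) (-pi/2) :>
        2 * sqrt (J 1 * J 2 * J 3 * J 4) * (- sin (-pi/2))"
    by (auto intro!: derivative_eq_intros)
  then show ?thesis unfolding dG_dth_def e by (simp add: DERIV_imp_deriv thc_def)
qed

lemma dGdth3: "dG_dth 3 thc J = 2 * sqrt (J 1 * J 2 * J 3 * J 4)"
proof -
  have e: "(\<lambda>s. G (thc(3 := s)) J) = (\<lambda>s. 2 * sqrt (J 1 * J 2 * J 3 * J 4) * cos (-pi/2 + s))"
    by (auto simp: G_def thc_def)
  have "DERIV (\<lambda>s. 2 * sqrt (J 1 * J 2 * J 3 * J 4) * cos (-pi/2 + s)) 0 :>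
        2 * sqrt (J 1 * J 2 * J 3 * J 4) * (- sin (-pi/2 + 0) * (0 + 1))"
    by (auto intro!: derivative_eq_intros)
  then show ?thesis unfolding dG_dth_def e by (simp add: DERIV_imp_deriv thc_def)
qed

lemma dGdth2: "dG_dth 2 thc J = - 2 * sqrt (J 1 * J 2 * J 3 * J 4)"
proof -
  have e: "(\<lambda>s. G (thc(2 := s)) J) = (\<lambda>s. 2 * sqrt (J 1 * J 2 * J 3 * J 4) * cos (-pi/2 - s))"
    by (auto simp: G_def thc_def)
  have "DERIV (\<lambda>s. 2 * sqrt (J 1 * J 2 * J 3 * J 4) * cos (-pi/2 - s)) 0 :>
        2 * sqrt (J 1 * J 2 * J 3 * J 4) * (- sin (-pi/2 - 0) * (0 - 1))"
    by (auto intro!: derivative_eq_intros)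
  then show ?thesis unfolding dG_dth_def e by (simp add: DERIV_imp_deriv thc_def)
qed

lemma dGdth4: "dG_dth 4 thc J = - 2 * sqrt (J 1 * J 2 * J 3 * J 4)"
proof -
  have e: "(\<lambda>s. G (thc(4 := s)) J) = (\<lambda>s. 2 * sqrt (J 1 * J 2 * J 3 * J 4) * cos (-pi/2 - s))"
    by (auto simp: G_def thc_def)
  have "DERIV (\<lambda>s. 2 * sqrt (J 1 * J 2 * J 3 * J 4) * cos (-pi/2 - s)) 0 :>
        2 * sqrt (J 1 * J 2 * J 3 * J 4) * (- sin (-pi/2 - 0) * (0 - 1))"
    by (auto intro!: derivative_eq_intros)
  then show ?thesis unfolding dG_dth_def e by (simp add: DERIV_imp_deriv thc_def)
qed


lemma main:
  fixes c e :: real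
  assumes c: "c > 0" and e: "0 < e" "e < c/6"
  shows "\<exists>th I T0. T0 > 0 \<and> is_orbit_on th I T0 \<and>
              I 0 1 = (c - e) / 3 \<and> I 0 2 = (c - e) / 3 \<and> I 0 3 = (c - e) / 3 \<and>
              I 0 4 = e \<and>
              I T0 1 = c/6 + 2*e/3 \<and> I T0 3 = c/6 + 2*e/3 \<and>
              I T0 2 = c/2 - 4*e/3 \<and> I T0 4 = c/6 \<and>
              T0 \<le> 6 / c"
proof -
  define a where "a = (c - e)/3"
  define d where "d = c/6 - e"
  define lo where "lo = - e/2"
  define hi where "hi = (a + d)/2"
  have d0: "0 < d" and dhi: "d < hi" and lo0: "lo < 0" and ahi: "a - hi > 0"
    and alo: "a + lo > 0" and elo: "e + lo > 0" and ac6: "a \<ge> c/6"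
    using c e by (auto simp: a_def d_def lo_def hi_def field_simps)
  define f where "f y = 1 / (2 * (a - y) * sqrt ((a + y) * (e + y)))" for y
  have pos: "a - y > 0" "a + y > 0" "e + y > 0" if "y \<in> {lo..hi}" for y
    using that ahi alo elo by auto
  have fpos: "f y > 0" if "y \<in> {lo..hi}" for y
    using pos[OF that] unfolding f_def by simp
  have fcont: "continuous_on {lo..hi} f"
    unfolding f_def using pos
    by (intro continuous_intros) (auto simp: less_imp_neq[symmetric] dest: pos)
  define tau where "tau y = integral {lo..y} f - integral {lo..0} f" for y
  define S where "S = {lo<..<hi}"
  have SI: "S \<subseteq> {lo..hi}" unfolding S_def by auto
  have tauD: "DERIV tau y :> f y" if "y \<in> S" for y
  proof -
    have y: "y \<in> {lo..hi}" using that SI by auto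
    have "((\<lambda>x. integral {lo..x} f) has_real_derivative f y) (at y within {lo..hi})"
      by (rule integral_has_real_derivative[OF fcont y])
    then have "((\<lambda>x. integral {lo..x} f) has_real_derivative f y) (at y)"
      using that at_within_interior[of y "{lo..hi}"] by (simp add: S_def)
    then show ?thesis unfolding tau_def
      using DERIV_diff[OF _ DERIV_const] by fastforce
  qed
  have tau0: "tau 0 = 0" by (simp add: tau_def)
  have mono: "tau u < tau v" if "u \<in> S" "v \<in> S" "u < v" for u v
  proof (rule DERIV_pos_imp_increasing[OF that(3)])
    fix x assume "u \<le> x" "x \<le> v"
    then have "x \<in> S" using that by (auto simp: S_def)
    then show "\<exists>y. DERIV tau x :> y \<and> 0 < y" using tauD fpos SI by blast
  qed
  have inj: "inj_on tau S"
  proof (rule inj_onI)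
    fix u v assume uv: "u \<in> S" "v \<in> S" "tau u = tau v"
    show "u = v"
      using mono[OF uv(1,2)] mono[OF uv(2,1)] uv(3) by (cases u v rule: linorder_cases) auto
  qed
  have tcont: "continuous_on S tau"
    using tauD DERIV_isCont by (blast intro: continuous_at_imp_continuous_on)
  define x where "x = inv_into S tau"
  have xtau: "x (tau z) = z" if "z \<in> S" for z
    using inj that unfolding x_def by simp
  have S0: "0 \<in> S" and Sd: "d \<in> S" using lo0 d0 dhi by (auto simp: S_def)
  define T0 where "T0 = tau d"
  have T0pos: "T0 > 0" using mono[OF S0 Sd d0] tau0 by (simp add: T0_def)
  have pre: "\<exists>y. 0 \<le> y \<and> y \<le> d \<and> tau y = t" if "t \<in> {0..T0}" for t
  proof (rule IVT)
    show "tau 0 \<le> t" "t \<le> tau d" using that tau0 by (auto simp: T0_def)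
    show "0 \<le> d" using d0 by simp
    show "\<forall>y. 0 \<le> y \<and> y \<le> d \<longrightarrow> isCont tau y"
    proof (intro allI impI)
      fix y assume "0 \<le> y \<and> y \<le> d"
      then have "y \<in> S" using lo0 dhi by (auto simp: S_def)
      then show "isCont tau y" using tauD DERIV_isCont by blast
    qed
  qed
  define I where "I t = (\<lambda>i::nat. if i = 1 then a - x t else if i = 2 then a + x t
                     else if i = 3 then a - x t else e + x t)" for t
  define th where "th t = thc" for t :: real
  have key: "inverse (f y) = 2 * sqrt ((a - y) * (a + y) * (a - y) * (e + y))"
    if "y \<in> {lo..hi}" for y
  proof -
    have "(a - y) * (a + y) * (a - y) * (e + y) = (a - y)^2 * ((a + y) * (e + y))"
      by (simp add: power2_eq_square)
    then have "sqrt ((a - y) * (a + y) * (a - y) * (e + y)) = (a - y) * sqrt ((a + y) * (e + y))"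
      using pos[OF that] by (simp add: real_sqrt_mult)
    then show ?thesis by (simp add: f_def)
  qed
  have orbit: "is_orbit_on th I T0"
    unfolding is_orbit_on_def
  proof (intro conjI ballI)
    fix t i assume t: "t \<in> {0..T0}" and i: "i \<in> {1..4::nat}"
    obtain y where y: "0 \<le> y" "y \<le> d" "tau y = t" using pre[OF t] by blast
    have yS: "y \<in> S" using y lo0 dhi by (auto simp: S_def)
    have yI: "y \<in> {lo..hi}" using yS SI by auto
    have xt: "x t = y" using xtau[OF yS] y by simp
    have Dx: "DERIV x t :> inverse (f y)"
      using has_field_derivative_inverse_strong[OF tauD[OF yS] _ _ yS tcont xtau] fpos[OF yI]
      by (simp add: S_def y(3))
    have i4: "i = 1 \<or> i = 2 \<or> i = 3 \<or> i = 4" using i by auto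
    show "I t i > 0" using pos[OF yI] i4 by (auto simp: I_def xt)
    show "((\<lambda>s. th s i) has_real_derivative dG_dI i (th t) (I t)) (at t within {0..T0})"
      by (simp add: th_def dGdI_thc)
    have K: "inverse (f y) = 2 * sqrt (I t 1 * I t 2 * I t 3 * I t 4)"
      using key[OF yI] by (simp add: I_def xt)
    show "((\<lambda>s. I s i) has_real_derivative - dG_dth i (th t) (I t)) (at t within {0..T0})"
    proof -
      have "((\<lambda>s. I s i) has_real_derivative - dG_dth i (th t) (I t)) (at t)"
        using i4
      proof (elim disjE)
        assume ik: "i = 1"
        have D: "dG_dth i (th t) (I t) = inverse (f y)"
          by (simp only: ik th_def dGdth1 K)
        have "((\<lambda>s. I s i) has_real_derivative -inverse (f y)) (at t)"
          using Dx ik by (auto simp: I_def intro!: derivative_eq_intros)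
        then show ?thesis using D by simp
      next
        assume ik: "i = 2"
        have D: "dG_dth i (th t) (I t) = - inverse (f y)"
          by (simp only: ik th_def dGdth2 K)
        have "((\<lambda>s. I s i) has_real_derivative inverse (f y)) (at t)"
          using Dx ik by (auto simp: I_def intro!: derivative_eq_intros)
        then show ?thesis using D by simp
      next
        assume ik: "i = 3"
        have D: "dG_dth i (th t) (I t) = inverse (f y)"
          by (simp only: ik th_def dGdth3 K)
        have "((\<lambda>s. I s i) has_real_derivative -inverse (f y)) (at t)"
          using Dx ik by (auto simp: I_def intro!: derivative_eq_intros)
        then show ?thesis using D by simp
      next
        assume ik: "i = 4"
        have D: "dG_dth i (th t) (I t) = - inverse (f y)"
          by (simp only: ik th_def dGdth4 K)
        have "((\<lambda>s. I s i) has_real_derivative inverse (f y)) (at t)"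
          using Dx ik by (auto simp: I_def intro!: derivative_eq_intros)
        then show ?thesis using D by simp
      qed
      then show ?thesis by (rule has_field_derivative_at_within)
    qed
  qed
  have x0: "x 0 = 0" using xtau[OF S0] tau0 by simp
  have xT: "x T0 = d" using xtau[OF Sd] by (simp add: T0_def)
  define H where "H y = 6 * sqrt (e + y) / (c * sqrt a)" for y
  have HD: "DERIV H y :> 3 / (c * sqrt a * sqrt (e + y))" if "y \<in> {lo..hi}" for y
  proof -
    have "DERIV H y :> 6 * (inverse (sqrt (e + y)) / 2 * (0 + 1)) / (c * sqrt a)"
      unfolding H_def using pos[OF that] c
      by (auto intro!: derivative_eq_intros)
    then show ?thesis by (simp add: field_simps)
  qed
  have fle: "f y \<le> 3 / (c * sqrt a * sqrt (e + y))" if "y \<in> {0..d}" for y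
  proof -
    have yI: "y \<in> {lo..hi}" using that lo0 dhi by auto
    note p = pos[OF yI]
    have ad: "a - d = c/6 + 2*e/3" by (simp add: a_def d_def field_simps)
    have a1: "a - y \<ge> c/6" using that e ad by auto
    have a2: "sqrt (a + y) \<ge> sqrt a" using that by simp
    have sa: "sqrt a > 0" using ac6 c by simp
    have se: "sqrt (e + y) > 0" using p by simp
    have "(c/6) * sqrt a \<le> (a - y) * sqrt (a + y)"
      using a1 a2 c sa by (intro mult_mono) auto
    then have "(c/6) * sqrt a * sqrt (e + y) \<le> (a - y) * sqrt (a + y) * sqrt (e + y)"
      using se by (intro mult_right_mono) auto
    moreover have "c * sqrt a * sqrt (e + y) = 6 * ((c/6) * sqrt a * sqrt (e + y))" by simp
    ultimately have "c * sqrt a * sqrt (e + y) \<le> 6 * ((a - y) * sqrt (a + y) * sqrt (e + y))"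
      by linarith
    moreover have "6 * ((a - y) * sqrt (a + y) * sqrt (e + y)) = 3 * (2 * (a - y) * sqrt ((a + y) * (e + y)))"
      unfolding real_sqrt_mult by (simp add: algebra_simps)
    ultimately have "c * sqrt a * sqrt (e + y) \<le> 3 * (2 * (a - y) * sqrt ((a + y) * (e + y)))"
      by linarith
    then show ?thesis unfolding f_def using p c sa se
      by (simp add: divide_simps mult_ac)
  qed
  have "(\<lambda>y. H y - tau y) 0 \<le> (\<lambda>y. H y - tau y) d"
  proof (rule DERIV_nonneg_imp_increasing_open[of 0 d "\<lambda>y. H y - tau y"])
    show "0 \<le> d" using d0 by simp
    fix y assume y: "0 < y" "y < d"
    then have yS: "y \<in> S" and yI: "y \<in> {lo..hi}" using lo0 dhi by (auto simp: S_def)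
    have "DERIV (\<lambda>y. H y - tau y) y :> 3 / (c * sqrt a * sqrt (e + y)) - f y"
      using HD[OF yI] tauD[OF yS] by (rule DERIV_diff)
    moreover have "3 / (c * sqrt a * sqrt (e + y)) - f y \<ge> 0" using fle y by auto
    ultimately show "\<exists>z. DERIV (\<lambda>y. H y - tau y) y :> z \<and> z \<ge> 0" by blast
  next
    have "continuous_on {0..d} H" unfolding H_def using e c ac6
      by (intro continuous_intros) auto
    moreover have "continuous_on {0..d} tau"
      using tcont by (rule continuous_on_subset) (use lo0 dhi in \<open>auto simp: S_def\<close>)
    ultimately show "continuous_on {0..d} (\<lambda>y. H y - tau y)"
      by (intro continuous_intros)
  qed
  then have "T0 \<le> H d - H 0" using tau0 by (simp add: T0_def)
  also have "\<dots> \<le> H d" using e c ac6 by (simp add: H_def)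
  also have "\<dots> \<le> 6 / c"
  proof -
    have "e + d = c/6" by (simp add: d_def)
    then have "sqrt (e + d) \<le> sqrt a" using ac6 by simp
    moreover have "sqrt a > 0" using ac6 c by simp
    ultimately show ?thesis using c by (simp add: H_def divide_simps)
  qed
  finally have T0le: "T0 \<le> 6 / c" .
  show ?thesis
    apply (rule exI[of _ th], rule exI[of _ I], rule exI[of _ T0])
    using T0pos orbit T0le x0 xT
    by (simp add: I_def a_def d_def field_simps)
qed

theorem lemma4p1:
  fixes c :: real
  assumes "c > 0"
  shows "\<exists>\<epsilon>0>0. \<forall>\<epsilon>::real. 0 < \<epsilon> \<and> \<epsilon> < \<epsilon>0 \<and> c > 8/3 * \<epsilon> \<longrightarrow>
           (\<exists>th I T0. T0 > 0 \<and> is_orbit_on th I T0 \<and>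
              I 0 1 = (c - \<epsilon>) / 3 \<and> I 0 2 = (c - \<epsilon>) / 3 \<and> I 0 3 = (c - \<epsilon>) / 3 \<and>
              I 0 4 = \<epsilon> \<and>
              I T0 1 = c/6 + 2*\<epsilon>/3 \<and> I T0 3 = c/6 + 2*\<epsilon>/3 \<and>
              I T0 2 = c/2 - 4*\<epsilon>/3 \<and> I T0 4 = c/6 \<and>
              T0 \<le> 6 / c)"
proof (rule exI[of _ "c/6"], intro conjI allI impI)
  show "c/6 > 0" using assms by simp
  fix \<epsilon> :: real assume h: "0 < \<epsilon> \<and> \<epsilon> < c/6 \<and> c > 8/3 * \<epsilon>"
  show "\<exists>th I T0. T0 > 0 \<and> is_orbit_on th I T0 \<and>
              I 0 1 = (c - \<epsilon>) / 3 \<and> I 0 2 = (c - \<epsilon>) / 3 \<and> I 0 3 = (c - \<epsilon>) / 3 \<and>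
              I 0 4 = \<epsilon> \<and>
              I T0 1 = c/6 + 2*\<epsilon>/3 \<and> I T0 3 = c/6 + 2*\<epsilon>/3 \<and>
              I T0 2 = c/2 - 4*\<epsilon>/3 \<and> I T0 4 = c/6 \<and>
              T0 \<le> 6 / c"
    using h by (intro main[OF assms]) auto
qed

end
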